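(* Let $y_1,\dots,y_n$ be real-valued and $n$ times continuously differentiable on an open interval $I$, and let $x\in I$. With $W_n(x)=\det\big(y_j^{(i-1)}(x)\big)_{i,j=1}^n$ and $C_n^h(x)=\det\big(y_j(x+(i-1)h)\big)_{i,j=1}^n$: if $W_n(x)>0$ (resp. $W_n(x)<0$), then there is $h_0>0$ such that $C_n^h(x)>0$ (resp. $C_n^h(x)<0$) for all $0<h<h_0$. *)

theory Defs
  imports "HOL-Analysis.Analysis" "Jordan_Normal_Form.Determinant"
begin

text \<open>f is n times continuously differentiable on the (open) set I:
  the derivatives of order 0..n-1 exist at every point of I (so that the iterated
  deriv really is the k-th derivative) and the n-th derivative is continuous on I.\<close>
definition C_n_on :: "nat \<Rightarrow> real set \<Rightarrow> (real \<Rightarrow> real) \<Rightarrow> bool" where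
  "C_n_on n I f \<longleftrightarrow>
     (\<forall>k<n. \<forall>t\<in>I. ((deriv ^^ k) f) differentiable (at t)) \<and>
     (\<forall>k\<le>n. continuous_on I ((deriv ^^ k) f))"

definition wronskian :: "nat \<Rightarrow> (nat \<Rightarrow> real \<Rightarrow> real) \<Rightarrow> real \<Rightarrow> real" where
  "wronskian n y x = det (mat n n (\<lambda>(i, j). (deriv ^^ i) (y j) x))"

definition casoratian :: "nat \<Rightarrow> (nat \<Rightarrow> real \<Rightarrow> real) \<Rightarrow> real \<Rightarrow> real \<Rightarrow> real" where
  "casoratian n y h x = det (mat n n (\<lambda>(i, j). y j (x + real i * h)))"

end

theory Submission
  imports Defs
begin


fun fdiff :: "real \<Rightarrow> (real \<Rightarrow> real) \<Rightarrow> nat \<Rightarrow> real \<Rightarrow> real" where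
  "fdiff h f 0 t = f t"
| "fdiff h f (Suc i) t = fdiff h f i (t + h) - fdiff h f i t"

fun cf :: "nat \<Rightarrow> nat \<Rightarrow> real" where
  "cf 0 k = (if k = 0 then 1 else 0)"
| "cf (Suc i) k = (case k of 0 \<Rightarrow> 0 | Suc k' \<Rightarrow> cf i k') - cf i k"

lemma cf_zero: "i < k \<Longrightarrow> cf i k = 0"
  by (induction i arbitrary: k) (auto split: nat.splits)

lemma cf_diag: "cf i i = 1"
  by (induction i) (auto simp: cf_zero)

lemma fdiff_sum: "i < N \<Longrightarrow> fdiff h f i t = (\<Sum>k=0..<N. cf i k * f (t + real k * h))"
proof (induction i arbitrary: N t)
  case 0
  then show ?case by (simp add: sum.atLeast_Suc_lessThan)
next
  case (Suc i)
  then obtain M where N: "N = Suc M" and M: "i < M" by (cases N) auto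
  have A: "fdiff h f i (t + h) = (\<Sum>k=0..<M. cf i k * f (t + real (Suc k) * h))"
    using Suc.IH[OF M, of "t+h"] by (simp add: algebra_simps)
  have B: "fdiff h f i t = (\<Sum>k=0..<N. cf i k * f (t + real k * h))"
    using Suc.IH[of N t] Suc.prems by simp
  have C: "(\<Sum>k=0..<N. (case k of 0 \<Rightarrow> 0 | Suc k' \<Rightarrow> cf i k') * f (t + real k * h))
      = (\<Sum>k=0..<M. cf i k * f (t + real (Suc k) * h))"
    unfolding N atLeast0LessThan sum.lessThan_Suc_shift by simp
  have D: "(\<Sum>k=0..<N. cf (Suc i) k * f (t + real k * h)) = (\<Sum>k=0..<N. (case k of 0 \<Rightarrow> 0 | Suc k' \<Rightarrow> cf i k') * f (t + real k * h)) - (\<Sum>k=0..<N. cf i k * f (t + real k * h))"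
    by (simp only: cf.simps left_diff_distrib sum_subtractf)
  show ?case
    using A B C D by simp
qed

lemma fdiff_deriv:
  assumes "\<And>k. k \<le> i \<Longrightarrow> f differentiable (at (t + real k * h))"
  shows "(fdiff h f i has_real_derivative fdiff h (deriv f) i t) (at t)"
  using assms
proof (induction i arbitrary: t)
  case 0
  then show ?case using DERIV_deriv_iff_real_differentiable by force
next
  case (Suc i)
  have a: "(fdiff h f i has_real_derivative fdiff h (deriv f) i t) (at t)"
    using Suc by auto
  have b: "(fdiff h f i has_real_derivative fdiff h (deriv f) i (t+h)) (at (t+h))"
    apply (rule Suc.IH)
    using Suc.prems[of "Suc _"] by (auto simp: algebra_simps)
  have b': "((\<lambda>s. fdiff h f i (s+h)) has_real_derivative fdiff h (deriv f) i (t+h)) (at t)"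
    using b DERIV_shift by blast
  show ?case using DERIV_diff[OF b' a] by simp
qed

lemma deriv_pow_Suc: "(deriv ^^ k) (deriv f) = deriv ((deriv ^^ k) f)"
  by (metis funpow_Suc_right funpow.simps(2) o_apply)

lemma fdiff_mvt:
  assumes "h > 0"
    and "\<And>k t. k < i \<Longrightarrow> a \<le> t \<Longrightarrow> t \<le> a + real i * h \<Longrightarrow> (deriv ^^ k) f differentiable (at t)"
  shows "\<exists>\<xi>. a \<le> \<xi> \<and> \<xi> \<le> a + real i * h \<and> fdiff h f i a = h ^ i * (deriv ^^ i) f \<xi>"
  using assms(2)
proof (induction i arbitrary: f a)
  case 0
  then show ?case by auto
next
  case (Suc i)
  have der: "(fdiff h f i has_real_derivative fdiff h (deriv f) i t) (at t)"
    if "a \<le> t" "t \<le> a + h" for t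
  proof (rule fdiff_deriv)
    fix k assume "k \<le> i"
    moreover have "real k * h \<le> real i * h" using \<open>k \<le> i\<close> assms(1) by (simp add: mult_right_mono)
    moreover have "0 \<le> real k * h" using assms(1) by simp
    ultimately have "a \<le> t + real k * h" "t + real k * h \<le> a + real (Suc i) * h"
      using that by (linarith, simp add: distrib_right)
    then show "f differentiable at (t + real k * h)"
      using Suc.prems[of 0 "t + real k * h"] by simp
  qed
  obtain \<eta> where eta: "a < \<eta>" "\<eta> < a + h"
    "fdiff h f i (a + h) - fdiff h f i a = (a + h - a) * fdiff h (deriv f) i \<eta>"
    using MVT2[of a "a+h" "fdiff h f i" "\<lambda>t. fdiff h (deriv f) i t"] der assms(1) by auto
  have "\<exists>\<xi>. \<eta> \<le> \<xi> \<and> \<xi> \<le> \<eta> + real i * h \<and> fdiff h (deriv f) i \<eta> = h ^ i * (deriv ^^ i) (deriv f) \<xi>"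
  proof (rule Suc.IH)
    fix k t assume "k < i" "\<eta> \<le> t" "t \<le> \<eta> + real i * h"
    then show "(deriv ^^ k) (deriv f) differentiable at t"
      using Suc.prems[of "Suc k" t] eta by (auto simp: deriv_pow_Suc algebra_simps)
  qed
  then obtain \<xi> where xi: "\<eta> \<le> \<xi>" "\<xi> \<le> \<eta> + real i * h"
     "fdiff h (deriv f) i \<eta> = h ^ i * (deriv ^^ i) (deriv f) \<xi>" by blast
  show ?case
    using xi eta by (intro exI[of _ \<xi>]) (auto simp: deriv_pow_Suc algebra_simps)
qed

lemma fdiff_lim:
  assumes "open I" "x \<in> I" "i < n" "C_n_on n I f"
  shows "((\<lambda>h. fdiff h f i x / h ^ i) \<longlongrightarrow> (deriv ^^ i) f x) (at_right 0)"
proof (rule tendstoI)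
  fix e :: real assume e: "e > 0"
  have "continuous_on I ((deriv ^^ i) f)" using assms(3,4) by (simp add: C_n_on_def)
  then have "isCont ((deriv ^^ i) f) x" using assms(1,2) continuous_on_eq_continuous_at by blast
  then obtain d where d: "d > 0" "\<And>x'. dist x' x < d \<Longrightarrow> dist ((deriv ^^ i) f x') ((deriv ^^ i) f x) < e"
    using e unfolding continuous_at_eps_delta by blast
  obtain r where r: "r > 0" "ball x r \<subseteq> I" using assms(1,2) openE by blast
  define b where "b = min d r / (real i + 1)"
  have b: "b > 0" using d r by (simp add: b_def)
  show "\<forall>\<^sub>F h in at_right 0. dist (fdiff h f i x / h ^ i) ((deriv ^^ i) f x) < e"
    unfolding eventually_at_right_field
  proof (intro exI[of _ b] conjI allI impI)
    show "b > 0" by (rule b)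
    fix h :: real assume h: "0 < h" "h < b"
    have "(real i + 1) * h < min d r"
      using h unfolding b_def by (simp add: field_simps)
    then have ih: "real i * h < d" "real i * h < r" using h by (auto simp: algebra_simps)
    obtain \<xi> where xi: "x \<le> \<xi>" "\<xi> \<le> x + real i * h" "fdiff h f i x = h ^ i * (deriv ^^ i) f \<xi>"
    proof -
      have "\<exists>\<xi>. x \<le> \<xi> \<and> \<xi> \<le> x + real i * h \<and> fdiff h f i x = h ^ i * (deriv ^^ i) f \<xi>"
      proof (rule fdiff_mvt[OF h(1)])
        fix k t assume kt: "k < i" "x \<le> t" "t \<le> x + real i * h"
        then have "t \<in> ball x r" using ih by (auto simp: dist_real_def)
        then have "t \<in> I" using r by blast
        then show "(deriv ^^ k) f differentiable at t"
          using assms(3,4) kt(1) by (simp add: C_n_on_def)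
      qed
      then show ?thesis using that by blast
    qed
    have "fdiff h f i x / h ^ i = (deriv ^^ i) f \<xi>" using xi(3) h by simp
    moreover have "dist \<xi> x < d" using xi ih by (simp add: dist_real_def)
    ultimately show "dist (fdiff h f i x / h ^ i) ((deriv ^^ i) f x) < e" using d by simp
  qed
qed

lemma det_mat_leibniz:
  "det (mat n n (\<lambda>(i,j). f i j :: 'a :: comm_ring_1)) = (\<Sum>p\<in>{p. p permutes {0..<n}}. signof p * (\<Prod>i=0..<n. f i (p i)))"
proof -
  have "det (mat n n (\<lambda>(i,j). f i j)) = (\<Sum>p\<in>{p. p permutes {0..<n}}. signof p * (\<Prod>i=0..<n. mat n n (\<lambda>(i,j). f i j) $$ (i, p i)))"
    by (rule det_def') simp
  also have "\<dots> = (\<Sum>p\<in>{p. p permutes {0..<n}}. signof p * (\<Prod>i=0..<n. f i (p i)))"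
  proof (rule sum.cong[OF refl])
    fix p assume "p \<in> {p. p permutes {0..<n}}"
    then have "\<And>i. i < n \<Longrightarrow> p i < n" using permutes_in_image by fastforce
    then show "signof p * (\<Prod>i=0..<n. mat n n (\<lambda>(i,j). f i j) $$ (i, p i)) = signof p * (\<Prod>i=0..<n. f i (p i))"
      by (intro arg_cong[where f="\<lambda>z. signof p * z"] prod.cong) auto
  qed
  finally show ?thesis .
qed

lemma det_tendsto:
  assumes "\<And>i j. i < n \<Longrightarrow> j < n \<Longrightarrow> ((\<lambda>h. f h i j) \<longlongrightarrow> (a i j :: real)) F"
  shows "((\<lambda>h. det (mat n n (\<lambda>(i,j). f h i j))) \<longlongrightarrow> det (mat n n (\<lambda>(i,j). a i j))) F"
  unfolding det_mat_leibniz
proof (rule tendsto_sum, rule tendsto_mult_left, rule tendsto_prod)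
  fix p i assume "p \<in> {p. p permutes {0..<n}}" "i \<in> {0..<n}"
  then have "i < n" "p i < n" using permutes_in_image by fastforce+
  then show "((\<lambda>h. f h i (p i)) \<longlongrightarrow> a i (p i)) F" using assms by blast
qed

lemma det_row_scale:
  "det (mat n n (\<lambda>(i,j). c i * f i j :: real)) = (\<Prod>i=0..<n. c i) * det (mat n n (\<lambda>(i,j). f i j))"
  unfolding det_mat_leibniz sum_distrib_left
  by (rule sum.cong[OF refl]) (simp add: prod.distrib)

lemma prod_list_ones: "\<forall>z\<in>set xs. z = (1::real) \<Longrightarrow> prod_list xs = 1"
  by (induction xs) auto

lemma casoratian_eq:
  assumes "h \<noteq> 0"
  shows "casoratian n y h x = (\<Prod>i=0..<n. h ^ i) * det (mat n n (\<lambda>(i,j). fdiff h (y j) i x / h ^ i))"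
proof -
  define L where "L = mat n n (\<lambda>(i,k). cf i k)"
  define C where "C = mat n n (\<lambda>(i,j). y j (x + real i * h))"
  have LC: "L * C = mat n n (\<lambda>(i,j). fdiff h (y j) i x)"
  proof (rule eq_matI)
    fix i j assume ij: "i < dim_row (mat n n (\<lambda>(i,j). fdiff h (y j) i x))" "j < dim_col (mat n n (\<lambda>(i,j). fdiff h (y j) i x))"
    then have "i < n" "j < n" by auto
    then show "(L * C) $$ (i, j) = mat n n (\<lambda>(i,j). fdiff h (y j) i x) $$ (i, j)"
      by (simp add: L_def C_def scalar_prod_def fdiff_sum[of i n])
  qed (auto simp: L_def C_def)
  have detL: "det L = 1"
  proof -
    have dl: "det L = prod_list (diag_mat L)"
      by (rule det_lower_triangular[of n]) (auto simp: L_def cf_zero)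
    have "\<forall>z\<in>set (diag_mat L). z = 1"
      by (auto simp: diag_mat_def L_def cf_diag)
    then have "prod_list (diag_mat L) = 1" by (rule prod_list_ones)
    with dl show ?thesis by simp
  qed
  have "det (L * C) = det L * det C"
    by (rule det_mult[of L n C]) (auto simp: L_def C_def)
  then have "casoratian n y h x = det (L * C)"
    by (simp add: detL casoratian_def C_def)
  also have "\<dots> = det (mat n n (\<lambda>(i,j). h ^ i * (fdiff h (y j) i x / h ^ i)))"
    unfolding LC using assms by (intro arg_cong[where f="\<lambda>M. det (mat n n M)"]) (auto simp: fun_eq_iff)
  also have "\<dots> = (\<Prod>i=0..<n. h ^ i) * det (mat n n (\<lambda>(i,j). fdiff h (y j) i x / h ^ i))"
    by (rule det_row_scale)
  finally show ?thesis .
qed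

theorem mainTheorem8:
  fixes n :: nat and y :: "nat \<Rightarrow> real \<Rightarrow> real" and I :: "real set" and x :: real
  assumes "open I" and "is_interval I"
    and "\<And>j. j < n \<Longrightarrow> C_n_on n I (y j)"
    and "x \<in> I"
  shows "(wronskian n y x > 0 \<longrightarrow>
            (\<exists>h0>0. \<forall>h. 0 < h \<and> h < h0 \<longrightarrow> casoratian n y h x > 0)) \<and>
         (wronskian n y x < 0 \<longrightarrow>
            (\<exists>h0>0. \<forall>h. 0 < h \<and> h < h0 \<longrightarrow> casoratian n y h x < 0))"
proof -
  define E where "E h = det (mat n n (\<lambda>(i,j). fdiff h (y j) i x / h ^ i))" for h
  have lim: "(E \<longlongrightarrow> wronskian n y x) (at_right 0)"
    unfolding E_def wronskian_def
    by (rule det_tendsto, rule fdiff_lim[OF assms(1,4)]) (auto intro: assms(3))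
  have pos: "\<forall>\<^sub>F h in at_right 0. (0::real) < h" by (rule eventually_at_right_less)
  have cas: "casoratian n y h x = (\<Prod>i=0..<n. h ^ i) * E h" if "h > 0" for h
    using casoratian_eq[of h n y x] that by (simp add: E_def)
  have pp: "(\<Prod>i=0..<n. h ^ i) > 0" if "h > 0" for h :: real
    using that by (intro prod_pos) auto
  show ?thesis
  proof (intro conjI impI)
    assume W: "wronskian n y x > 0"
    have "\<forall>\<^sub>F h in at_right 0. 0 < E h" using order_tendstoD(1)[OF lim W] .
    with pos have "\<forall>\<^sub>F h in at_right 0. 0 < casoratian n y h x"
      by eventually_elim (simp add: cas pp)
    then show "\<exists>h0>0. \<forall>h. 0 < h \<and> h < h0 \<longrightarrow> casoratian n y h x > 0"
      unfolding eventually_at_right_field by auto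
  next
    assume W: "wronskian n y x < 0"
    have "\<forall>\<^sub>F h in at_right 0. E h < 0" using order_tendstoD(2)[OF lim W] .
    with pos have "\<forall>\<^sub>F h in at_right 0. casoratian n y h x < 0"
      by eventually_elim (simp add: cas pp mult_pos_neg)
    then show "\<exists>h0>0. \<forall>h. 0 < h \<and> h < h0 \<longrightarrow> casoratian n y h x < 0"
      unfolding eventually_at_right_field by auto
  qed
qed

end
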